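(* Let $(A,\mu,\alpha,\beta)$ be a BiHom-associative algebra (with $\mu(a\otimes b)=a\cdot b$) and let $r=\sum_i x_i\otimes y_i\in A\otimes A$ satisfy $(\alpha\otimes\alpha)(r)=r=(\beta\otimes\beta)(r)$. Define $\Delta_r:A\to A\otimes A$ by $\Delta_r(a)=\sum_i\alpha(x_i)\otimes y_i\cdot a-\sum_i a\cdot x_i\otimes\beta(y_i)$. Then $(\alpha\otimes\alpha)\circ\Delta_r=\Delta_r\circ\alpha$, $(\beta\otimes\beta)\circ\Delta_r=\Delta_r\circ\beta$, and, writing $\Delta_r(a)=a_1\otimes a_2$, for all $a,b\in A$: \[ \Delta_r(a\cdot b)=\alpha(a)\cdot b_1\otimes\beta(b_2)+\alpha(a_1)\otimes a_2\cdot\beta(b). \]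
   Context: Work over a field. A BiHom-associative algebra is a 4-tuple $(A,\mu,\alpha,\beta)$ with $\alpha,\beta:A\to A$ commuting linear maps, multiplicative for $\mu$, and $\alpha(x)\cdot(y\cdot z)=(x\cdot y)\cdot\beta(z)$ for all $x,y,z$. *)

theory Defs
  imports Complex_Main
begin

definition bilinear_map ::
  "('k::field \<Rightarrow> 'a::ab_group_add \<Rightarrow> 'a) \<Rightarrow> ('k \<Rightarrow> 'w::ab_group_add \<Rightarrow> 'w) \<Rightarrow> ('a \<Rightarrow> 'a \<Rightarrow> 'w) \<Rightarrow> bool" where
  "bilinear_map s sw B \<longleftrightarrow> (\<forall>x. Vector_Spaces.linear s sw (B x)) \<and> (\<forall>y. Vector_Spaces.linear s sw (\<lambda>x. B x y))"

text \<open>Elements of A \<otimes> A are written as formal sums, i.e. lists [(x_1,y_1),...] standing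
  for sum_i x_i \<otimes> y_i.  Two such sums are equal in A \<otimes> A iff they have the same image
  under every bilinear map out of A \<times> A (universal property of the tensor product);
  the target space type 'w is an explicit parameter.\<close>

definition tensor_eq ::
  "'w::ab_group_add itself \<Rightarrow> ('k::field \<Rightarrow> 'a::ab_group_add \<Rightarrow> 'a) \<Rightarrow> ('a \<times> 'a) list \<Rightarrow> ('a \<times> 'a) list \<Rightarrow> bool" where
  "tensor_eq _ s xs ys \<longleftrightarrow>
     (\<forall>(sw :: 'k \<Rightarrow> 'w \<Rightarrow> 'w) B. vector_space sw \<and> bilinear_map s sw B \<longrightarrow>
        sum_list (map (\<lambda>(x,y). B x y) xs) = sum_list (map (\<lambda>(x,y). B x y) ys))"

definition bihom_assoc_algebra ::
  "('k::field \<Rightarrow> 'a::ab_group_add \<Rightarrow> 'a) \<Rightarrow> ('a \<Rightarrow> 'a \<Rightarrow> 'a) \<Rightarrow> ('a \<Rightarrow> 'a) \<Rightarrow> ('a \<Rightarrow> 'a) \<Rightarrow> bool" where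
  "bihom_assoc_algebra s mu \<alpha> \<beta> \<longleftrightarrow>
     vector_space s \<and> bilinear_map s s mu \<and> Vector_Spaces.linear s s \<alpha> \<and> Vector_Spaces.linear s s \<beta> \<and>
     \<alpha> \<circ> \<beta> = \<beta> \<circ> \<alpha> \<and>
     (\<forall>x y. \<alpha> (mu x y) = mu (\<alpha> x) (\<alpha> y)) \<and>
     (\<forall>x y. \<beta> (mu x y) = mu (\<beta> x) (\<beta> y)) \<and>
     (\<forall>x y z. mu (\<alpha> x) (mu y z) = mu (mu x y) (\<beta> z))"

definition tmap :: "('a \<Rightarrow> 'a) \<Rightarrow> ('a \<Rightarrow> 'a) \<Rightarrow> ('a \<times> 'a) list \<Rightarrow> ('a \<times> 'a) list" where
  "tmap f g t = map (\<lambda>(x,y). (f x, g y)) t"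

definition Delta_r :: "('a::ab_group_add \<Rightarrow> 'a \<Rightarrow> 'a) \<Rightarrow> ('a \<Rightarrow> 'a) \<Rightarrow> ('a \<Rightarrow> 'a) \<Rightarrow> ('a \<times> 'a) list \<Rightarrow> 'a \<Rightarrow> ('a \<times> 'a) list" where
  "Delta_r mu \<alpha> \<beta> r a =
     map (\<lambda>(x,y). (\<alpha> x, mu y a)) r @ map (\<lambda>(x,y). (- mu a x, \<beta> y)) r"

end

theory Submission
  imports Defs
begin

lemma lin_neg: "Vector_Spaces.linear s1 s2 f \<Longrightarrow> f (- x) = - f x"
  unfolding Vector_Spaces.linear_def by (metis module_hom.neg)

lemma lin_comp: "Vector_Spaces.linear s1 s2 f \<Longrightarrow> Vector_Spaces.linear s2 s3 g \<Longrightarrow> Vector_Spaces.linear s1 s3 (\<lambda>x. g (f x))"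
  using Vector_Spaces.linear_compose[of s1 s2 f s3 g] by (simp add: o_def)

lemma bil_comp:
  assumes "bilinear_map s sw B" "Vector_Spaces.linear s s f" "Vector_Spaces.linear s s g"
  shows "bilinear_map s sw (\<lambda>x y. B (f x) (g y))"
  using assms unfolding bilinear_map_def
  by (auto intro!: lin_comp[of s s f sw] lin_comp[of s s g sw])

lemma sum_neg_pair: "sum_list (map (\<lambda>(x,y). - (f x y :: 'w::ab_group_add)) xs) = - sum_list (map (\<lambda>(x,y). f x y) xs)"
  by (induction xs) auto

lemma sum_negf: "sum_list (map (\<lambda>p. - (f p :: 'w::ab_group_add)) xs) = - sum_list (map f xs)"
  by (induction xs) auto

lemma inv_sum:
  assumes "tensor_eq TYPE('w::ab_group_add) s (tmap f f r) r" "vector_space (sw :: 'k::field \<Rightarrow> 'w \<Rightarrow> 'w)"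
    "bilinear_map s sw B"
  shows "sum_list (map (\<lambda>(x,y). B (f x) (f y)) r) = sum_list (map (\<lambda>(x,y). B x y) r)"
proof -
  have "sum_list (map (\<lambda>(x,y). B x y) (tmap f f r)) = sum_list (map (\<lambda>(x,y). B x y) r)"
    using assms unfolding tensor_eq_def by blast
  moreover have "map (\<lambda>(x,y). B x y) (tmap f f r) = map (\<lambda>(x,y). B (f x) (f y)) r"
    unfolding tmap_def by (induction r) auto
  ultimately show ?thesis by simp
qed

theorem proposition5p2:
  fixes s :: "'k::field \<Rightarrow> 'a::ab_group_add \<Rightarrow> 'a"
    and mu :: "'a \<Rightarrow> 'a \<Rightarrow> 'a" and \<alpha> \<beta> :: "'a \<Rightarrow> 'a"
    and r :: "('a \<times> 'a) list"
  assumes "bihom_assoc_algebra s mu \<alpha> \<beta>"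
    and "tensor_eq TYPE('w::ab_group_add) s (tmap \<alpha> \<alpha> r) r"
    and "tensor_eq TYPE('w) s (tmap \<beta> \<beta> r) r"
  shows "(\<forall>a. tensor_eq TYPE('w) s (tmap \<alpha> \<alpha> (Delta_r mu \<alpha> \<beta> r a)) (Delta_r mu \<alpha> \<beta> r (\<alpha> a))) \<and>
         (\<forall>a. tensor_eq TYPE('w) s (tmap \<beta> \<beta> (Delta_r mu \<alpha> \<beta> r a)) (Delta_r mu \<alpha> \<beta> r (\<beta> a))) \<and>
         (\<forall>a b. tensor_eq TYPE('w) s (Delta_r mu \<alpha> \<beta> r (mu a b))
            (map (\<lambda>(b1,b2). (mu (\<alpha> a) b1, \<beta> b2)) (Delta_r mu \<alpha> \<beta> r b) @
             map (\<lambda>(a1,a2). (\<alpha> a1, mu a2 (\<beta> b))) (Delta_r mu \<alpha> \<beta> r a)))"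
proof -
  from assms(1) have vs: "vector_space s" and bm: "bilinear_map s s mu"
    and la: "Vector_Spaces.linear s s \<alpha>" and lb: "Vector_Spaces.linear s s \<beta>"
    and ab: "\<And>x. \<alpha> (\<beta> x) = \<beta> (\<alpha> x)"
    and am: "\<And>x y. \<alpha> (mu x y) = mu (\<alpha> x) (\<alpha> y)"
    and bmu: "\<And>x y. \<beta> (mu x y) = mu (\<beta> x) (\<beta> y)"
    and asc: "\<And>x y z. mu (\<alpha> x) (mu y z) = mu (mu x y) (\<beta> z)"
    unfolding bihom_assoc_algebra_def by (auto simp: fun_eq_iff)
  have lml: "\<And>c. Vector_Spaces.linear s s (\<lambda>x. mu c x)" and lmr: "\<And>c. Vector_Spaces.linear s s (\<lambda>x. mu x c)"
    using bm unfolding bilinear_map_def by auto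
  have mneg: "\<And>c x. mu c (- x) = - mu c x" using lml lin_neg by metis
  have aneg: "\<And>x. \<alpha> (- x) = - \<alpha> x" using la lin_neg by metis
  have bneg: "\<And>x. \<beta> (- x) = - \<beta> x" using lb lin_neg by metis
  show ?thesis
  proof (intro conjI allI)
    fix a
    show "tensor_eq TYPE('w) s (tmap \<alpha> \<alpha> (Delta_r mu \<alpha> \<beta> r a)) (Delta_r mu \<alpha> \<beta> r (\<alpha> a))"
      unfolding tensor_eq_def
    proof (intro allI impI, elim conjE)
      fix sw :: "'k \<Rightarrow> 'w \<Rightarrow> 'w" and B
      assume vw: "vector_space sw" and bB: "bilinear_map s sw B"
      have Bn: "\<And>u v. B (- u) v = - B u v"
        using bB unfolding bilinear_map_def using lin_neg by metis
      have 1: "sum_list (map (\<lambda>(x,y). B (\<alpha> (\<alpha> x)) (mu (\<alpha> y) (\<alpha> a))) r) = sum_list (map (\<lambda>(x,y). B (\<alpha> x) (mu y (\<alpha> a))) r)"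
        using inv_sum[OF assms(2) vw bil_comp[OF bB la lmr]] by simp
      have 2: "sum_list (map (\<lambda>(x,y). B (mu (\<alpha> a) (\<alpha> x)) (\<beta> (\<alpha> y))) r) = sum_list (map (\<lambda>(x,y). B (mu (\<alpha> a) x) (\<beta> y)) r)"
        using inv_sum[OF assms(2) vw bil_comp[OF bB lml lb]] by simp
      show "sum_list (map (\<lambda>(x,y). B x y) (tmap \<alpha> \<alpha> (Delta_r mu \<alpha> \<beta> r a))) = sum_list (map (\<lambda>(x,y). B x y) (Delta_r mu \<alpha> \<beta> r (\<alpha> a)))"
        using 1 2 by (simp add: tmap_def Delta_r_def o_def case_prod_beta' am aneg Bn ab sum_neg_pair sum_negf)
    qed
  next
    fix a
    show "tensor_eq TYPE('w) s (tmap \<beta> \<beta> (Delta_r mu \<alpha> \<beta> r a)) (Delta_r mu \<alpha> \<beta> r (\<beta> a))"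
      unfolding tensor_eq_def
    proof (intro allI impI, elim conjE)
      fix sw :: "'k \<Rightarrow> 'w \<Rightarrow> 'w" and B
      assume vw: "vector_space sw" and bB: "bilinear_map s sw B"
      have Bn: "\<And>u v. B (- u) v = - B u v"
        using bB unfolding bilinear_map_def using lin_neg by metis
      have 1: "sum_list (map (\<lambda>(x,y). B (\<alpha> (\<beta> x)) (mu (\<beta> y) (\<beta> a))) r) = sum_list (map (\<lambda>(x,y). B (\<alpha> x) (mu y (\<beta> a))) r)"
        using inv_sum[OF assms(3) vw bil_comp[OF bB la lmr]] by simp
      have 2: "sum_list (map (\<lambda>(x,y). B (mu (\<beta> a) (\<beta> x)) (\<beta> (\<beta> y))) r) = sum_list (map (\<lambda>(x,y). B (mu (\<beta> a) x) (\<beta> y)) r)"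
        using inv_sum[OF assms(3) vw bil_comp[OF bB lml lb]] by simp
      show "sum_list (map (\<lambda>(x,y). B x y) (tmap \<beta> \<beta> (Delta_r mu \<alpha> \<beta> r a))) = sum_list (map (\<lambda>(x,y). B x y) (Delta_r mu \<alpha> \<beta> r (\<beta> a)))"
        using 1 2 by (simp add: tmap_def Delta_r_def o_def case_prod_beta' bmu bneg Bn ab sum_neg_pair sum_negf)
    qed
  next
    fix a b
    show "tensor_eq TYPE('w) s (Delta_r mu \<alpha> \<beta> r (mu a b))
            (map (\<lambda>(b1,b2). (mu (\<alpha> a) b1, \<beta> b2)) (Delta_r mu \<alpha> \<beta> r b) @
             map (\<lambda>(a1,a2). (\<alpha> a1, mu a2 (\<beta> b))) (Delta_r mu \<alpha> \<beta> r a))"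
      unfolding tensor_eq_def
    proof (intro allI impI, elim conjE)
      fix sw :: "'k \<Rightarrow> 'w \<Rightarrow> 'w" and B
      assume vw: "vector_space sw" and bB: "bilinear_map s sw B"
      have Bn: "\<And>u v. B (- u) v = - B u v"
        using bB unfolding bilinear_map_def using lin_neg by metis
      have 1: "sum_list (map (\<lambda>(x,y). B (\<alpha> (\<alpha> x)) (mu (\<alpha> y) (mu a b))) r) = sum_list (map (\<lambda>(x,y). B (\<alpha> x) (mu y (mu a b))) r)"
        using inv_sum[OF assms(2) vw bil_comp[OF bB la lmr]] by simp
      have 2: "sum_list (map (\<lambda>(x,y). B (mu (mu a b) (\<beta> x)) (\<beta> (\<beta> y))) r) = sum_list (map (\<lambda>(x,y). B (mu (mu a b) x) (\<beta> y)) r)"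
        using inv_sum[OF assms(3) vw bil_comp[OF bB lml lb]] by simp
      have e1: "\<And>y. mu (mu y a) (\<beta> b) = mu (\<alpha> y) (mu a b)" using asc by metis
      have e2: "\<And>x. mu (\<alpha> a) (mu b x) = mu (mu a b) (\<beta> x)" using asc by metis
      show "sum_list (map (\<lambda>(x,y). B x y) (Delta_r mu \<alpha> \<beta> r (mu a b))) =
          sum_list (map (\<lambda>(x,y). B x y) (map (\<lambda>(b1,b2). (mu (\<alpha> a) b1, \<beta> b2)) (Delta_r mu \<alpha> \<beta> r b) @
             map (\<lambda>(a1,a2). (\<alpha> a1, mu a2 (\<beta> b))) (Delta_r mu \<alpha> \<beta> r a)))"
        using 1 2 by (simp add: Delta_r_def o_def case_prod_beta' am bmu aneg mneg Bn e1 e2 sum_neg_pair sum_negf)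
    qed
  qed
qed

end
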